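(* Let $\Sigma$ be an alphabet with $|\Sigma|\ge3$, $k\ge1$, and $f\colon(\Sigma^* )^k\to\Sigma^*$ RCP. Then exactly one of the following holds: ($C_1$) there exists $b\in\Sigma$ such that $f(x_1,\ldots,x_k)\in b\Sigma^*$ for all $x_1,\ldots,x_k\in\Sigma^*$; ($C_2$) there exists $i\in\{1,\ldots,k\}$ such that $f(x_1,\ldots,x_k)\in x_i\Sigma^*$ for all $x_1,\ldots,x_k\in\Sigma^*$; ($C_3$) $f(x_1,\ldots,x_k)=\varepsilon$ for all $x_1,\ldots,x_k\in\Sigma^*$.
   Context: $\Sigma^*$ is the free monoid over $\Sigma$ (finite words, concatenation, empty word $\varepsilon$). For a word $w$, $w\Sigma^*$ denotes the set of words having $w$ as a prefix. A function $f\colon(\Sigma^* )^k\to\Sigma^*$ is RCP if for every monoid morphism $\varphi\colon\Sigma^*\to\Sigma^*$ and all $u_1,\ldots,u_k,v_1,\ldots,v_k$ with $\varphi(u_i)=\varphi(v_i)$ for all $i$, we have $\varphi(f(u_1,\ldots,u_k))=\varphi(f(v_1,\ldots,v_k))$. *)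

theory Defs
  imports Main
begin

text \<open>Words over the alphabet 'a are lists; concatenation is append, the empty word is Nil.
A k-tuple of words is a list of words of length k.\<close>

definition monoid_morphism :: "('a list \<Rightarrow> 'a list) \<Rightarrow> bool" where
  "monoid_morphism \<phi> \<longleftrightarrow> \<phi> [] = [] \<and> (\<forall>u v. \<phi> (u @ v) = \<phi> u @ \<phi> v)"

definition prefix_set :: "'a list \<Rightarrow> 'a list set" where
  "prefix_set w = {w @ z | z. True}"

definition RCP :: "nat \<Rightarrow> ('a list list \<Rightarrow> 'a list) \<Rightarrow> bool" where
  "RCP k f \<longleftrightarrow> (\<forall>\<phi> us vs. monoid_morphism \<phi> \<longrightarrow> length us = k \<longrightarrow> length vs = k \<longrightarrow>
      (\<forall>i<k. \<phi> (us ! i) = \<phi> (vs ! i)) \<longrightarrow> \<phi> (f us) = \<phi> (f vs))"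

end

theory Submission imports Defs begin

definition hom :: "('a \<Rightarrow> 'a list) \<Rightarrow> 'a list \<Rightarrow> 'a list" where
  "hom h w = concat (map h w)"

lemma hom_Nil[simp]: "hom h [] = []" by (simp add: hom_def)
lemma hom_Cons[simp]: "hom h (x # xs) = h x @ hom h xs" by (simp add: hom_def)
lemma hom_append[simp]: "hom h (xs @ ys) = hom h xs @ hom h ys" by (simp add: hom_def)
lemma hom_map[simp]: "hom (\<lambda>x. [\<mu> x]) w = map \<mu> w" by (induction w) auto
lemma hom_erase: "hom (\<lambda>x. if x = d then [] else [x]) w = filter (\<lambda>x. x \<noteq> d) w"
  by (induction w) auto
lemma hom_subst_id: "c \<notin> set z \<Longrightarrow> hom (\<lambda>x. if x = c then w else [x]) z = z"
  by (induction z) auto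
lemma hom_nonerasing: "(\<forall>x. h x \<noteq> []) \<Longrightarrow> hom h w = [] \<longleftrightarrow> w = []"
  by (cases w) auto

lemma mm_hom: "monoid_morphism (hom h)"
  by (simp add: monoid_morphism_def)

definition RCP1 :: "('a list \<Rightarrow> 'a list) \<Rightarrow> bool" where
  "RCP1 g \<longleftrightarrow> (\<forall>h u v. hom h u = hom h v \<longrightarrow> hom h (g u) = hom h (g v))"

lemma sep:
  assumes n1: "\<forall>x. h1 x \<noteq> []" and n2: "\<forall>x. h2 x \<noteq> []"
    and s: "\<forall>s t. s \<noteq> t \<longrightarrow> hd (h1 s) \<noteq> hd (h1 t) \<or> hd (h2 s) \<noteq> hd (h2 t)"
    and p1: "\<exists>r. hom h1 p = hom h1 u @ r" and p2: "\<exists>r. hom h2 p = hom h2 u @ r"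
  shows "\<exists>r. p = u @ r"
  using p1 p2
proof (induction u arbitrary: p)
  case Nil then show ?case by simp
next
  case (Cons s u p)
  show ?case
  proof (cases p)
    case Nil
    then show ?thesis using Cons.prems n1 by auto
  next
    case (Cons t p')
    show ?thesis
    proof (cases "s = t")
      case True
      have "\<exists>r. hom h1 p' = hom h1 u @ r" using Cons.prems(1) \<open>p = t # p'\<close> True by auto
      moreover have "\<exists>r. hom h2 p' = hom h2 u @ r" using Cons.prems(2) \<open>p = t # p'\<close> True by auto
      ultimately obtain r where "p' = u @ r" using Cons.IH by blast
      then show ?thesis using \<open>p = t # p'\<close> True by auto
    next
      case False
      obtain r1 where r1: "h1 t @ hom h1 p' = h1 s @ hom h1 u @ r1" using Cons.prems(1) \<open>p = t # p'\<close> by auto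
      obtain r2 where r2: "h2 t @ hom h2 p' = h2 s @ hom h2 u @ r2" using Cons.prems(2) \<open>p = t # p'\<close> by auto
      have "hd (h1 t) = hd (h1 s)"
        using arg_cong[OF r1, of hd] n1 by (simp add: hd_append)
      moreover have "hd (h2 t) = hd (h2 s)"
        using arg_cong[OF r2, of hd] n2 by (simp add: hd_append)
      ultimately show ?thesis using s False by metis
    qed
  qed
qed

lemma ex_other:
  assumes "card (UNIV :: ('a::finite) set) \<ge> 3"
  shows "\<exists>z::'a. z \<noteq> x \<and> z \<noteq> y"
proof -
  have "card {x, y} \<le> 2" by (simp add: card_insert_le_m1)
  then have "UNIV - {x,y} \<noteq> {}" using assms
    by (metis Diff_eq_empty_iff card_mono finite not_less_eq_eq numeral_2_eq_2 numeral_3_eq_3 order_trans subset_UNIV)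
  then show ?thesis by blast
qed


lemma rcp1_app: "RCP1 g \<Longrightarrow> hom h u = hom h v \<Longrightarrow> hom h (g u) = hom h (g v)"
  unfolding RCP1_def by blast

lemma rcp1_merge:
  assumes "RCP1 g"
  shows "map (\<lambda>x. if x = d then e else x) (g [d]) = map (\<lambda>x. if x = d then e else x) (g [e])"
  using rcp1_app[OF assms, of "\<lambda>x. [if x = d then e else x]" "[d]" "[e]"] by simp

lemma rcp1_erase:
  assumes "RCP1 g"
  shows "filter (\<lambda>x. x \<noteq> d) (g [d]) = filter (\<lambda>x. x \<noteq> d) (g [])"
  using rcp1_app[OF assms, of "\<lambda>x. if x = d then [] else [x]" "[d]" "[]"] by (simp add: hom_erase)

lemma LT:
  fixes g :: "('a::finite) list \<Rightarrow> 'a list"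
  assumes c3: "card (UNIV :: 'a set) \<ge> 3" and R: "RCP1 g"
  shows "(\<exists>b. (\<exists>r. g [] = b#r) \<and> (\<forall>d. \<exists>r. g [d] = b # r)) \<or> (\<forall>d. \<exists>r. g[d] = d # r)
         \<or> (g [] = [] \<and> (\<forall>d. g [d] = []))"
proof (cases "\<exists>d. g [d] = []")
  case True
  then obtain d where d: "g [d] = []" by blast
  have all: "g [e] = []" for e
    using arg_cong[OF rcp1_merge[OF R, of d e], of length] d by simp
  have "g [] = []"
  proof (rule ccontr)
    assume "g [] \<noteq> []"
    then obtain x w where xw: "g [] = x # w" by (cases "g []") auto
    obtain e where "e \<noteq> x" using ex_other[OF c3] by blast
    then show False using rcp1_erase[OF R, of e] all[of e] xw by simp
  qed
  then show ?thesis using all by blast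
next
  case False
  then have ne: "g [d] \<noteq> []" for d by blast
  have hdm: "(if hd (g [d]) = d then e else hd (g [d])) = (if hd (g [e]) = d then e else hd (g [e]))" for d e
  proof -
    have "hd (map (\<lambda>x. if x = d then e else x) (g [d])) = hd (map (\<lambda>x. if x = d then e else x) (g [e]))"
      using rcp1_merge[OF R, of d e] by simp
    then show ?thesis using ne by (simp add: hd_map)
  qed
  show ?thesis
  proof (cases "\<forall>d. hd (g [d]) = d")
    case True
    then have "\<forall>d. \<exists>r. g[d] = d # r" using ne by (metis list.collapse)
    then show ?thesis by blast
  next
    case False
    then obtain d where bd: "hd (g [d]) \<noteq> d" by blast
    define b where "b = hd (g [d])"
    have hb: "hd (g [d]) = b" "b \<noteq> d" using bd by (auto simp: b_def)
    have oth: "hd (g [e]) = b" if "e \<noteq> d" "e \<noteq> b" for e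
      using hdm[of d e] that hb by (cases "hd (g [e]) = d") auto
    have allb: "hd (g [e]) = b" for e
    proof -
      consider "e = d" | "e \<noteq> d" "e \<noteq> b" | "e = b" by blast
      then show ?thesis
      proof cases
        case 1 then show ?thesis by (simp add: b_def)
      next
        case 2 then show ?thesis by (rule oth)
      next
        case 3
        obtain e' where e': "e' \<noteq> b" "e' \<noteq> d" using ex_other[OF c3] by blast
        have h1: "hd (g [e']) = b" using oth e' by blast
        have "hd (g [b]) = b \<or> hd (g [b]) = d"
          using hdm[of d b] hb by (cases "hd (g [b]) = d") auto
        moreover have "hd (g [b]) = b \<or> hd (g [b]) = e'"
          using hdm[of e' b] h1 e' by (cases "hd (g [b]) = e'") auto
        ultimately show ?thesis using 3 e' by auto
      qed
    qed
    have gs: "\<exists>r. g [e] = b # r" for e using allb[of e] ne[of e] by (metis list.collapse)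
    obtain e1 where e1: "e1 \<noteq> b" using ex_other[OF c3] by blast
    obtain e2 where e2: "e2 \<noteq> b" "e2 \<noteq> e1" using ex_other[OF c3] by blast
    have fe: "\<exists>r. filter (\<lambda>x. x \<noteq> e) (g []) = b # r" if "e \<noteq> b" for e
    proof -
      obtain r where "g [e] = b # r" using gs by blast
      then have "filter (\<lambda>x. x \<noteq> e) (g []) = b # filter (\<lambda>x. x \<noteq> e) r"
        using rcp1_erase[OF R, of e] that by simp
      then show ?thesis by blast
    qed
    have "\<exists>r. g [] = b # r"
    proof (cases "g []")
      case Nil then show ?thesis using fe[OF e1] by simp
    next
      case (Cons x w)
      show ?thesis
      proof (cases "x = e1")
        case True
        then show ?thesis using fe[OF e2(1)] e2 Cons e1 by auto
      next
        case False
        then show ?thesis using fe[OF e1] Cons by auto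
      qed
    qed
    then show ?thesis using gs by blast
  qed
qed


lemma merge_card_less:
  assumes "c \<in> set z" "a \<in> set z" "a \<noteq> c"
  shows "card (set (map (\<lambda>x. if x = c then a else x) z)) < card (set z)"
proof -
  have "set (map (\<lambda>x. if x = c then a else x) z) \<subseteq> set z - {c}" using assms by auto
  then have "card (set (map (\<lambda>x. if x = c then a else x) z)) \<le> card (set z - {c})"
    by (simp add: card_mono)
  also have "\<dots> < card (set z)" using assms(1) by (metis card_Diff1_less finite_set)
  finally show ?thesis .
qed

lemma merge_idem: "a \<noteq> c \<Longrightarrow> map (\<lambda>x. if x = c then a else x) (map (\<lambda>x. if x = c then a else x) z)
   = map (\<lambda>x. if x = c then a else x) z"
  by (induction z) auto

lemma card_ge_ex: "1 \<le> card A \<Longrightarrow> \<exists>x. x \<in> A"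
  by (cases "A = {}") auto

lemma GI:
  fixes g :: "('a::finite) list \<Rightarrow> 'a list" and tgt :: "'a list \<Rightarrow> 'a list"
  assumes c3: "card (UNIV :: 'a set) \<ge> 3"
    and base0: "\<exists>r. g [] = tgt [] @ r" and base1: "\<And>d. \<exists>r. g [d] = tgt [d] @ r"
    and tr: "\<And>h z z'. \<forall>x. h x \<noteq> [] \<Longrightarrow> hom h z = hom h z' \<Longrightarrow> \<exists>r. g z' = tgt z' @ r
              \<Longrightarrow> \<exists>r. hom h (g z) = hom h (tgt z) @ r"
  shows "\<exists>r. g z = tgt z @ r"
proof (induction "card (set z)" arbitrary: z rule: less_induct)
  case less
  consider "card (set z) = 0" | "card (set z) = 1" | "card (set z) = 2" | "card (set z) \<ge> 3" by linarith
  then show ?case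
  proof cases
    case 1
    then have "z = []" by simp
    then show ?thesis using base0 by simp
  next
    case 2
    obtain a where a: "set z = {a}" using 2 card_1_singleton_iff[of "set z"] by auto
    then have zne: "z \<noteq> []" by auto
    have hz: "hd z = a" using a zne hd_in_set[of z] by auto
    obtain c1 where c1: "c1 \<noteq> a" using ex_other[OF c3] by blast
    obtain c2 where c2: "c2 \<noteq> a" "c2 \<noteq> c1" using ex_other[OF c3] by blast
    define h1 where "h1 = (\<lambda>x. if x = c1 then z else [x])"
    define h2 where "h2 = (\<lambda>x. if x = c2 then z else [x])"
    have n1: "\<forall>x. h1 x \<noteq> []" using zne by (simp add: h1_def)
    have n2: "\<forall>x. h2 x \<noteq> []" using zne by (simp add: h2_def)
    have e1: "hom h1 z = hom h1 [c1]" unfolding h1_def using c1 a by (simp add: hom_subst_id)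
    have e2: "hom h2 z = hom h2 [c2]" unfolding h2_def using c2 a by (simp add: hom_subst_id)
    have p1: "\<exists>r. hom h1 (g z) = hom h1 (tgt z) @ r" using tr[OF n1 e1 base1] .
    have p2: "\<exists>r. hom h2 (g z) = hom h2 (tgt z) @ r" using tr[OF n2 e2 base1] .
    have s: "\<forall>s t. s \<noteq> t \<longrightarrow> hd (h1 s) \<noteq> hd (h1 t) \<or> hd (h2 s) \<noteq> hd (h2 t)"
      unfolding h1_def h2_def using hz c1 c2 by auto
    show ?thesis using sep[OF n1 n2 s p1 p2] .
  next
    case 3
    obtain a e where ae: "a \<noteq> e" "set z = {a, e}" using 3 card_2_iff[of "set z"] by auto
    then have zne: "z \<noteq> []" by auto
    have hz: "hd z = a \<or> hd z = e" using ae zne hd_in_set[of z] by auto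
    obtain c where c: "c \<noteq> a" "c \<noteq> e" using ex_other[OF c3] by blast
    define h1 where "h1 = (\<lambda>x. if x = c then z else [x])"
    define \<mu> where "\<mu> = (\<lambda>x. if x = a then e else x)"
    define h2 where "h2 = (\<lambda>x. [\<mu> x])"
    have n1: "\<forall>x. h1 x \<noteq> []" using zne by (simp add: h1_def)
    have n2: "\<forall>x. h2 x \<noteq> []" by (simp add: h2_def)
    have e1: "hom h1 z = hom h1 [c]" unfolding h1_def using c ae by (simp add: hom_subst_id)
    have e2: "hom h2 z = hom h2 (map \<mu> z)" unfolding h2_def \<mu>_def using merge_idem[of e a z] ae by simp
    have lt: "card (set (map \<mu> z)) < card (set z)" unfolding \<mu>_def using merge_card_less[of a z e] ae by simp
    have p1: "\<exists>r. hom h1 (g z) = hom h1 (tgt z) @ r" using tr[OF n1 e1 base1] .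
    have p2: "\<exists>r. hom h2 (g z) = hom h2 (tgt z) @ r" using tr[OF n2 e2 less[OF lt]] .
    have s: "\<forall>s t. s \<noteq> t \<longrightarrow> hd (h1 s) \<noteq> hd (h1 t) \<or> hd (h2 s) \<noteq> hd (h2 t)"
      unfolding h1_def h2_def \<mu>_def using hz c ae by auto
    show ?thesis using sep[OF n1 n2 s p1 p2] .
  next
    case 4
    obtain a where a: "a \<in> set z" using card_ge_ex[of "set z"] 4 by auto
    have "card (set z - {a}) \<ge> 1" using 4 a by (simp add: card_Diff_singleton)
    then obtain c where c: "c \<in> set z" "c \<noteq> a" using card_ge_ex[of "set z - {a}"] by auto
    have "card (set z - {a} - {c}) \<ge> 1" using 4 a c by (simp add: card_Diff_singleton)
    then obtain d where d: "d \<in> set z" "d \<noteq> a" "d \<noteq> c" using card_ge_ex[of "set z - {a} - {c}"] by auto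
    define \<mu>1 where "\<mu>1 = (\<lambda>x. if x = c then a else x)"
    define \<mu>2 where "\<mu>2 = (\<lambda>x. if x = c then d else x)"
    define h1 where "h1 = (\<lambda>x. [\<mu>1 x])"
    define h2 where "h2 = (\<lambda>x. [\<mu>2 x])"
    have n1: "\<forall>x. h1 x \<noteq> []" by (simp add: h1_def)
    have n2: "\<forall>x. h2 x \<noteq> []" by (simp add: h2_def)
    have e1: "hom h1 z = hom h1 (map \<mu>1 z)" unfolding h1_def \<mu>1_def using merge_idem[of a c z] c by simp
    have e2: "hom h2 z = hom h2 (map \<mu>2 z)" unfolding h2_def \<mu>2_def using merge_idem[of d c z] d by simp
    have lt1: "card (set (map \<mu>1 z)) < card (set z)" unfolding \<mu>1_def using merge_card_less[of c z a] a c by simp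
    have lt2: "card (set (map \<mu>2 z)) < card (set z)" unfolding \<mu>2_def using merge_card_less[of c z d] c d by simp
    have p1: "\<exists>r. hom h1 (g z) = hom h1 (tgt z) @ r" using tr[OF n1 e1 less[OF lt1]] .
    have p2: "\<exists>r. hom h2 (g z) = hom h2 (tgt z) @ r" using tr[OF n2 e2 less[OF lt2]] .
    have s: "\<forall>s t. s \<noteq> t \<longrightarrow> hd (h1 s) \<noteq> hd (h1 t) \<or> hd (h2 s) \<noteq> hd (h2 t)"
      unfolding h1_def h2_def \<mu>1_def \<mu>2_def using c d by auto
    show ?thesis using sep[OF n1 n2 s p1 p2] .
  qed
qed


theorem thm1:
  fixes g :: "('a::finite) list \<Rightarrow> 'a list"
  assumes c3: "card (UNIV :: 'a set) \<ge> 3" and R: "RCP1 g"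
  shows "(\<exists>b. \<forall>z. \<exists>r. g z = b # r) \<or> (\<forall>z. \<exists>r. g z = z @ r) \<or> (\<forall>z. g z = [])"
proof -
  consider (K) b where "\<exists>r. g [] = b#r" "\<forall>d. \<exists>r. g [d] = b # r"
    | (V) "\<forall>d. \<exists>r. g[d] = d # r" | (E) "g [] = []" "\<forall>d. g [d] = []"
    using LT[OF c3 R] by blast
  then show ?thesis
  proof cases
    case K
    have b0: "\<exists>r. g [] = (\<lambda>_. [b]) [] @ r" using K by simp
    have b1: "\<exists>r. g [d] = (\<lambda>_. [b]) [d] @ r" for d using K by simp
    have tr: "\<exists>r. hom h (g z) = hom h ((\<lambda>_. [b]) z) @ r"
        if ne: "\<forall>x. h x \<noteq> []" and eq: "hom h z = hom h z'" and pp: "\<exists>r. g z' = (\<lambda>_. [b]) z' @ r" for h z z'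
      proof -
        obtain r where r: "g z' = [b] @ r" using pp by auto
        have "hom h (g z) = hom h (g z')" using rcp1_app[OF R eq] .
        also have "\<dots> = hom h [b] @ hom h r" using r by simp
        finally show ?thesis by auto
      qed
    have "\<exists>r. g z = (\<lambda>_. [b]) z @ r" for z using GI[OF c3 b0 b1 tr] .
    then show ?thesis by auto
  next
    case V
    have b0: "\<exists>r. g [] = (\<lambda>z. z) [] @ r" by simp
    have b1: "\<exists>r. g [d] = (\<lambda>z. z) [d] @ r" for d using V by simp
    have tr: "\<exists>r. hom h (g z) = hom h ((\<lambda>z. z) z) @ r"
        if ne: "\<forall>x. h x \<noteq> []" and eq: "hom h z = hom h z'" and pp: "\<exists>r. g z' = (\<lambda>z. z) z' @ r" for h z z'
      proof -
        obtain r where r: "g z' = z' @ r" using pp by auto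
        have "hom h (g z) = hom h (g z')" using rcp1_app[OF R eq] .
        also have "\<dots> = hom h z' @ hom h r" using r by simp
        finally show ?thesis using eq by auto
      qed
    have "\<exists>r. g z = (\<lambda>z. z) z @ r" for z using GI[OF c3 b0 b1 tr] .
    then show ?thesis by auto
  next
    case E
    have un: "g (replicate n a) = []" for n a
    proof (cases n)
      case 0 then show ?thesis using E by simp
    next
      case (Suc m)
      obtain c where c: "c \<noteq> a" using ex_other[OF c3] by blast
      define h where "h = (\<lambda>x. if x = c then replicate n a else [x])"
      have ne: "\<forall>x. h x \<noteq> []" using Suc by (simp add: h_def)
      have "hom h (replicate n a) = hom h [c]" unfolding h_def using c by (simp add: hom_subst_id)
      then have "hom h (g (replicate n a)) = hom h (g [c])" by (rule rcp1_app[OF R])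
      then have "hom h (g (replicate n a)) = []" using E by simp
      then show ?thesis using hom_nonerasing[OF ne] by simp
    qed
    have "g z = []" for z
    proof -
      obtain a :: 'a where True by blast
      define h where "h = (\<lambda>x::'a. [a])"
      have "hom h z = hom h (replicate (length z) a)" unfolding h_def
        by (simp add: map_replicate_const)
      then have "hom h (g z) = hom h (g (replicate (length z) a))" by (rule rcp1_app[OF R])
      then have "hom h (g z) = []" using un by simp
      then show ?thesis using hom_nonerasing[of h] by (simp add: h_def)
    qed
    then show ?thesis by auto
  qed
qed


lemma step:
  fixes G :: "('a::finite) list list \<Rightarrow> 'a list \<Rightarrow> 'a list" and k :: nat
  assumes c3: "card (UNIV :: 'a set) \<ge> 3"
    and IHw: "\<And>w. (\<exists>b. \<forall>xs. length xs = k \<longrightarrow> (\<exists>r. G xs w = b # r))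
                 \<or> (\<exists>i<k. \<forall>xs. length xs = k \<longrightarrow> (\<exists>r. G xs w = xs!i @ r))
                 \<or> (\<forall>xs. length xs = k \<longrightarrow> G xs w = [])"
    and SL: "\<And>xs. length xs = k \<Longrightarrow> (\<exists>b. \<forall>w. \<exists>r. G xs w = b # r) \<or> (\<forall>w. \<exists>r. G xs w = w @ r)
                 \<or> (\<forall>w. G xs w = [])"
  shows "(\<exists>b. \<forall>xs w. length xs = k \<longrightarrow> (\<exists>r. G xs w = b # r))
       \<or> (\<exists>i<k. \<forall>xs w. length xs = k \<longrightarrow> (\<exists>r. G xs w = xs!i @ r))
       \<or> (\<forall>xs w. length xs = k \<longrightarrow> (\<exists>r. G xs w = w @ r))
       \<or> (\<forall>xs w. length xs = k \<longrightarrow> G xs w = [])"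
proof -
  have PL: "\<exists>i<k. \<forall>xs w. length xs = k \<longrightarrow> (\<exists>r. G xs w = xs!i @ r)"
    if H: "\<forall>w. \<exists>i<k. \<forall>xs. length xs = k \<longrightarrow> (\<exists>r. G xs w = xs!i @ r)"
  proof -
    obtain i0 where i0: "i0 < k" "\<forall>xs. length xs = k \<longrightarrow> (\<exists>r. G xs [] = xs!i0 @ r)" using H by blast
    have "\<forall>xs. length xs = k \<longrightarrow> (\<exists>r. G xs w = xs!i0 @ r)" for w
    proof (cases "w = []")
      case True then show ?thesis using i0 by simp
    next
      case wne: False
      obtain j where j: "j<k" "\<forall>xs. length xs = k \<longrightarrow> (\<exists>r. G xs w = xs!j @ r)" using H by blast
      show ?thesis
      proof (cases "j = i0")
        case True then show ?thesis using j by simp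
      next
        case False
        obtain d where d: "d \<noteq> hd w" using ex_other[OF c3] by blast
        obtain c where c: "c \<noteq> d" using ex_other[OF c3] by blast
        define xs where "xs = (replicate k [c])[j := [d]]"
        have lx: "length xs = k" by (simp add: xs_def)
        have xi0: "xs!i0 = [c]" using i0 False by (simp add: xs_def)
        have xj: "xs!j = [d]" using j by (simp add: xs_def)
        obtain r1 where r1: "G xs [] = c # r1" using i0 xi0 lx by force
        obtain r2 where r2: "G xs w = d # r2" using j xj lx by force
        from SL[OF lx] show ?thesis
        proof (elim disjE exE)
          fix b assume "\<forall>w. \<exists>r. G xs w = b # r"
          then have "c = b" "d = b" using r1 r2 by (metis list.inject)+
          then show ?thesis using c by simp
        next
          assume "\<forall>w. \<exists>r. G xs w = w @ r"
          then obtain r where "G xs w = w @ r" by blast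
          then have "hd (G xs w) = hd w" using wne by simp
          then show ?thesis using r2 d by simp
        next
          assume "\<forall>w. G xs w = []"
          then show ?thesis using r1 by simp
        qed
      qed
    qed
    then show ?thesis using i0 by blast
  qed
  have PK: "\<forall>xs w. length xs = k \<longrightarrow> (\<exists>r. G xs w = b # r)"
    if K1: "\<forall>xs. length xs = k \<longrightarrow> (\<exists>r. G xs w1 = b # r)"
      and K2: "length x1 = k" "\<forall>w. \<exists>r. G x1 w = b # r" for b w1 x1
  proof (intro allI impI)
    fix xs :: "'a list list" and w :: "'a list" assume lx: "length xs = k"
    obtain rw1 where rw1: "G xs w1 = b # rw1" using K1 lx by blast
    from SL[OF lx] show "\<exists>r. G xs w = b # r"
    proof (elim disjE exE)
      fix b'' assume A: "\<forall>w. \<exists>r. G xs w = b'' # r"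
      then have "b'' = b" using rw1 by (metis list.inject)
      then show ?thesis using A by blast
    next
      assume V: "\<forall>w. \<exists>r. G xs w = w @ r"
      obtain w' where w': "w' \<noteq> b" using ex_other[OF c3] by blast
      obtain rr where g1: "G xs [w'] = w' # rr" using V[rule_format, of "[w']"] by auto
      from IHw[of "[w']"] show ?thesis
      proof (elim disjE exE conjE)
        fix b2 assume "\<forall>xs. length xs = k \<longrightarrow> (\<exists>r. G xs [w'] = b2 # r)"
        then obtain s1 s2 where "G x1 [w'] = b2 # s1" "G xs [w'] = b2 # s2" using K2 lx by blast
        moreover obtain s3 where "G x1 [w'] = b # s3" using K2 by blast
        ultimately show ?thesis using g1 w' by simp
      next
        fix j assume j: "j < k" "\<forall>xs. length xs = k \<longrightarrow> (\<exists>r. G xs [w'] = xs!j @ r)"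
        obtain d where d: "d \<noteq> b" "d \<noteq> w'" using ex_other[OF c3] by blast
        define ys where "ys = replicate k [d]"
        have ly: "length ys = k" by (simp add: ys_def)
        have "ys!j = [d]" using j by (simp add: ys_def)
        then obtain s where s: "G ys [w'] = d # s" using j ly by force
        obtain s' where s': "G ys w1 = b # s'" using K1 ly by blast
        from SL[OF ly] show ?thesis
        proof (elim disjE exE)
          fix b3 assume "\<forall>w. \<exists>r. G ys w = b3 # r"
          then have "b3 = b" "b3 = d" using s s' by (metis list.inject)+
          then show ?thesis using d by simp
        next
          assume VV: "\<forall>w. \<exists>r. G ys w = w @ r"
          obtain t where "G ys [w'] = w' # t" using VV[rule_format, of "[w']"] by auto
          then show ?thesis using s d by simp
        next
          assume "\<forall>w. G ys w = []"
          then show ?thesis using s by simp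
        qed
      next
        assume "\<forall>xs. length xs = k \<longrightarrow> G xs [w'] = []"
        then show ?thesis using g1 lx by simp
      qed
    next
      assume "\<forall>w. G xs w = []"
      then show ?thesis using rw1 by simp
    qed
  qed
  have PE: "\<forall>xs w. length xs = k \<longrightarrow> G xs w = []"
    if E1: "\<forall>xs. length xs = k \<longrightarrow> G xs w1 = []"
      and E2: "length x1 = k" "\<forall>w. G x1 w = []" for w1 x1
  proof (intro allI impI)
    fix xs :: "'a list list" and w :: "'a list" assume lx: "length xs = k"
    have ew1: "G xs w1 = []" using E1 lx by blast
    from SL[OF lx] show "G xs w = []"
    proof (elim disjE exE)
      fix b assume "\<forall>w. \<exists>r. G xs w = b # r"
      then show ?thesis using ew1 by (metis list.distinct(1))
    next
      assume V: "\<forall>w. \<exists>r. G xs w = w @ r"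
      obtain a :: 'a where True by blast
      obtain rr where g1: "G xs [a] = a # rr" using V[rule_format, of "[a]"] by auto
      from IHw[of "[a]"] show ?thesis
      proof (elim disjE exE conjE)
        fix b2 assume "\<forall>xs. length xs = k \<longrightarrow> (\<exists>r. G xs [a] = b2 # r)"
        then show ?thesis using E2 by force
      next
        fix j assume j: "j < k" "\<forall>xs. length xs = k \<longrightarrow> (\<exists>r. G xs [a] = xs!j @ r)"
        obtain c where c: "c \<noteq> a" using ex_other[OF c3] by blast
        define ys where "ys = replicate k [c]"
        have ly: "length ys = k" by (simp add: ys_def)
        have "ys!j = [c]" using j by (simp add: ys_def)
        then obtain s where s: "G ys [a] = c # s" using j ly by force
        have s': "G ys w1 = []" using E1 ly by blast
        from SL[OF ly] show ?thesis
        proof (elim disjE exE)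
          fix b3 assume "\<forall>w. \<exists>r. G ys w = b3 # r"
          then show ?thesis using s' by (metis list.distinct(1))
        next
          assume VV: "\<forall>w. \<exists>r. G ys w = w @ r"
          obtain t where "G ys [a] = a # t" using VV[rule_format, of "[a]"] by auto
          then show ?thesis using s c by simp
        next
          assume "\<forall>w. G ys w = []"
          then show ?thesis using s by simp
        qed
      next
        assume "\<forall>xs. length xs = k \<longrightarrow> G xs [a] = []"
        then show ?thesis using g1 lx by simp
      qed
    next
      assume "\<forall>w. G xs w = []"
      then show ?thesis by simp
    qed
  qed
  show ?thesis
  proof (cases "\<forall>w. \<exists>i<k. \<forall>xs. length xs = k \<longrightarrow> (\<exists>r. G xs w = xs!i @ r)")
    case True
    then show ?thesis using PL by blast
  next
    case False
    then obtain w1 where nV: "\<not> (\<exists>i<k. \<forall>xs. length xs = k \<longrightarrow> (\<exists>r. G xs w1 = xs!i @ r))" by blast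
    then have KE: "(\<exists>b. \<forall>xs. length xs = k \<longrightarrow> (\<exists>r. G xs w1 = b # r)) \<or> (\<forall>xs. length xs = k \<longrightarrow> G xs w1 = [])"
      using IHw[of w1] by blast
    show ?thesis
    proof (cases "\<forall>xs. length xs = k \<longrightarrow> (\<forall>w. \<exists>r. G xs w = w @ r)")
      case True then show ?thesis by blast
    next
      case False
      then obtain x1 where x1: "length x1 = k" "\<not> (\<forall>w. \<exists>r. G x1 w = w @ r)" by blast
      then have KE': "(\<exists>b. \<forall>w. \<exists>r. G x1 w = b # r) \<or> (\<forall>w. G x1 w = [])" using SL[OF x1(1)] by blast
      from KE KE' show ?thesis
      proof (elim disjE exE)
        fix b b' assume A: "\<forall>xs. length xs = k \<longrightarrow> (\<exists>r. G xs w1 = b # r)" and B: "\<forall>w. \<exists>r. G x1 w = b' # r"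
        obtain r1 r2 where "G x1 w1 = b # r1" "G x1 w1 = b' # r2" using A B x1 by blast
        then have "b = b'" by simp
        then show ?thesis using PK[OF A x1(1)] B by blast
      next
        fix b assume A: "\<forall>xs. length xs = k \<longrightarrow> (\<exists>r. G xs w1 = b # r)" and B: "\<forall>w. G x1 w = []"
        obtain r where "G x1 w1 = b # r" using A x1(1) by blast
        then show ?thesis using B by simp
      next
        fix b assume A: "\<forall>xs. length xs = k \<longrightarrow> G xs w1 = []" and B: "\<forall>w. \<exists>r. G x1 w = b # r"
        obtain r where "G x1 w1 = b # r" using B by blast
        then show ?thesis using A x1(1) by simp
      next
        assume A: "\<forall>xs. length xs = k \<longrightarrow> G xs w1 = []" and B: "\<forall>w. G x1 w = []"
        then show ?thesis using PE[OF A x1(1) B] by blast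
      qed
    qed
  qed
qed


lemma rcp_fix_last:
  assumes "RCP (Suc k) f"
  shows "RCP k (\<lambda>xs. f (xs @ [w]))"
  unfolding RCP_def
proof (intro allI impI)
  fix \<phi> :: "'a list \<Rightarrow> 'a list" and us vs :: "'a list list"
  assume m: "monoid_morphism \<phi>" and lu: "length us = k" and lv: "length vs = k"
    and eq: "\<forall>i<k. \<phi> (us ! i) = \<phi> (vs ! i)"
  have "\<forall>i<Suc k. \<phi> ((us @ [w]) ! i) = \<phi> ((vs @ [w]) ! i)"
    using eq lu lv by (auto simp: nth_append less_Suc_eq)
  then show "\<phi> (f (us @ [w])) = \<phi> (f (vs @ [w]))"
    using assms m lu lv unfolding RCP_def by auto
qed

lemma rcp_slice:
  assumes "RCP (Suc k) f" "length xs = k"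
  shows "RCP1 (\<lambda>w. f (xs @ [w]))"
  unfolding RCP1_def
proof (intro allI impI)
  fix h :: "'a \<Rightarrow> 'a list" and u v :: "'a list"
  assume eq: "hom h u = hom h v"
  have "\<forall>i<Suc k. hom h ((xs @ [u]) ! i) = hom h ((xs @ [v]) ! i)"
    using eq assms(2) by (auto simp: nth_append less_Suc_eq)
  then show "hom h (f (xs @ [u])) = hom h (f (xs @ [v]))"
    using assms mm_hom[of h] unfolding RCP_def by auto
qed

lemma rcp_one:
  assumes "RCP (Suc 0) f"
  shows "RCP1 (\<lambda>z. f [z])"
  using rcp_slice[OF assms, of "[]"] by simp

lemma thmK:
  fixes f :: "('a::finite) list list \<Rightarrow> 'a list"
  assumes c3: "card (UNIV :: 'a set) \<ge> 3"
  shows "RCP (Suc m) f \<Longrightarrow> (\<exists>b. \<forall>xs. length xs = Suc m \<longrightarrow> (\<exists>r. f xs = b # r))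
     \<or> (\<exists>i<Suc m. \<forall>xs. length xs = Suc m \<longrightarrow> (\<exists>r. f xs = xs!i @ r))
     \<or> (\<forall>xs. length xs = Suc m \<longrightarrow> f xs = [])"
proof (induction m arbitrary: f)
  case 0
  have one: "xs = [xs!0]" if "length xs = Suc 0" for xs :: "'a list list"
    using that by (cases xs) auto
  from thm1[OF c3 rcp_one[OF "0.prems"]] show ?case
  proof (elim disjE exE)
    fix b assume A: "\<forall>z. \<exists>r. f [z] = b # r"
    have "\<exists>r. f xs = b # r" if "length xs = Suc 0" for xs using A one[OF that] by metis
    then show ?thesis by blast
  next
    assume A: "\<forall>z. \<exists>r. f [z] = z @ r"
    have "\<exists>r. f xs = xs!0 @ r" if "length xs = Suc 0" for xs using A one[OF that] by metis
    then show ?thesis by blast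
  next
    assume A: "\<forall>z. f [z] = []"
    have "f xs = []" if "length xs = Suc 0" for xs using A one[OF that] by metis
    then show ?thesis by blast
  qed
next
  case (Suc m)
  define G where "G = (\<lambda>xs w. f (xs @ [w]))"
  have IHw: "(\<exists>b. \<forall>xs. length xs = Suc m \<longrightarrow> (\<exists>r. G xs w = b # r))
                 \<or> (\<exists>i<Suc m. \<forall>xs. length xs = Suc m \<longrightarrow> (\<exists>r. G xs w = xs!i @ r))
                 \<or> (\<forall>xs. length xs = Suc m \<longrightarrow> G xs w = [])" for w
    using Suc.IH[OF rcp_fix_last[OF Suc.prems, of w]] unfolding G_def .
  have SL: "(\<exists>b. \<forall>w. \<exists>r. G xs w = b # r) \<or> (\<forall>w. \<exists>r. G xs w = w @ r)
                 \<or> (\<forall>w. G xs w = [])" if "length xs = Suc m" for xs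
    using thm1[OF c3 rcp_slice[OF Suc.prems that]] unfolding G_def .
  have dec: "ys = butlast ys @ [last ys]" "length (butlast ys) = Suc m"
    if "length ys = Suc (Suc m)" for ys :: "'a list list"
    using that by (cases ys rule: rev_cases; auto)+
  have nb: "ys ! i = butlast ys ! i" if "length ys = Suc (Suc m)" "i < Suc m" for ys :: "'a list list" and i
    using that by (simp add: nth_butlast)
  have nl: "ys ! Suc m = last ys" if "length ys = Suc (Suc m)" for ys :: "'a list list"
  proof -
    have "ys \<noteq> []" using that by auto
    then show ?thesis using that last_conv_nth[of ys] by simp
  qed
  have st: "(\<exists>b. \<forall>xs w. length xs = Suc m \<longrightarrow> (\<exists>r. G xs w = b # r))
       \<or> (\<exists>i<Suc m. \<forall>xs w. length xs = Suc m \<longrightarrow> (\<exists>r. G xs w = xs!i @ r))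
       \<or> (\<forall>xs w. length xs = Suc m \<longrightarrow> (\<exists>r. G xs w = w @ r))
       \<or> (\<forall>xs w. length xs = Suc m \<longrightarrow> G xs w = [])"
    by (rule step[OF c3 IHw SL])
  from st show ?case
  proof (elim disjE exE conjE)
    fix b assume A: "\<forall>xs w. length xs = Suc m \<longrightarrow> (\<exists>r. G xs w = b # r)"
    have "\<exists>r. f ys = b # r" if "length ys = Suc (Suc m)" for ys
      using A dec[OF that] unfolding G_def by metis
    then show ?thesis by blast
  next
    fix i assume i: "i < Suc m" and A: "\<forall>xs w. length xs = Suc m \<longrightarrow> (\<exists>r. G xs w = xs!i @ r)"
    have "\<exists>r. f ys = ys!i @ r" if "length ys = Suc (Suc m)" for ys
      using A dec[OF that] nb[OF that i] unfolding G_def by metis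
    then show ?thesis using i by (metis less_SucI)
  next
    assume A: "\<forall>xs w. length xs = Suc m \<longrightarrow> (\<exists>r. G xs w = w @ r)"
    have "\<exists>r. f ys = ys!Suc m @ r" if "length ys = Suc (Suc m)" for ys
      using A dec[OF that] nl[OF that] unfolding G_def by metis
    then show ?thesis by blast
  next
    assume A: "\<forall>xs w. length xs = Suc m \<longrightarrow> G xs w = []"
    have "f ys = []" if "length ys = Suc (Suc m)" for ys
      using A dec[OF that] unfolding G_def by metis
    then show ?thesis by blast
  qed
qed

theorem mainTheorem18:
  fixes f :: "('a::finite) list list \<Rightarrow> 'a list" and k :: nat
  assumes "card (UNIV :: 'a set) \<ge> 3" and "k \<ge> 1" and "RCP k f"
  shows "(let C1 = (\<exists>b::'a. \<forall>xs. length xs = k \<longrightarrow> f xs \<in> prefix_set [b]);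
              C2 = (\<exists>i<k. \<forall>xs. length xs = k \<longrightarrow> f xs \<in> prefix_set (xs ! i));
              C3 = (\<forall>xs. length xs = k \<longrightarrow> f xs = [])
          in (C1 \<and> \<not> C2 \<and> \<not> C3) \<or> (\<not> C1 \<and> C2 \<and> \<not> C3) \<or> (\<not> C1 \<and> \<not> C2 \<and> C3))"
proof -
  obtain m where k: "k = Suc m" using assms(2) by (cases k) auto
  have pm: "v \<in> prefix_set w \<longleftrightarrow> (\<exists>r. v = w @ r)" for v w :: "'a list"
    unfolding prefix_set_def by auto
  define C1 where "C1 = (\<exists>b::'a. \<forall>xs. length xs = k \<longrightarrow> f xs \<in> prefix_set [b])"
  define C2 where "C2 = (\<exists>i<k. \<forall>xs. length xs = k \<longrightarrow> f xs \<in> prefix_set (xs ! i))"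
  define C3 where "C3 = (\<forall>xs. length xs = k \<longrightarrow> f xs = [])"
  have ex: "C1 \<or> C2 \<or> C3"
    using thmK[OF assms(1), of m f] assms(3) unfolding C1_def C2_def C3_def k pm by simp
  have n12: "\<not> (C1 \<and> C2)"
  proof
    assume "C1 \<and> C2"
    then obtain b i where b: "\<forall>xs. length xs = k \<longrightarrow> (\<exists>r. f xs = b # r)"
      and i: "i < k" "\<forall>xs. length xs = k \<longrightarrow> (\<exists>r. f xs = xs!i @ r)"
      unfolding C1_def C2_def pm by auto
    obtain c where c: "c \<noteq> b" using ex_other[OF assms(1)] by blast
    obtain r1 where "f (replicate k [c]) = b # r1" using b[rule_format, of "replicate k [c]"] by auto
    moreover obtain r2 where "f (replicate k [c]) = c # r2" using i(2)[rule_format, of "replicate k [c]"] i(1) by auto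
    ultimately show False using c by simp
  qed
  have n13: "\<not> (C1 \<and> C3)"
  proof
    assume "C1 \<and> C3"
    then obtain b where b: "\<forall>xs. length xs = k \<longrightarrow> (\<exists>r. f xs = b # r)"
      and e: "\<forall>xs. length xs = k \<longrightarrow> f xs = []"
      unfolding C1_def C3_def pm by auto
    obtain r1 where "f (replicate k []) = b # r1" using b[rule_format, of "replicate k []"] by auto
    then show False using e by simp
  qed
  have n23: "\<not> (C2 \<and> C3)"
  proof
    assume "C2 \<and> C3"
    then obtain i where i: "i < k" "\<forall>xs. length xs = k \<longrightarrow> (\<exists>r. f xs = xs!i @ r)"
      and e: "\<forall>xs. length xs = k \<longrightarrow> f xs = []"
      unfolding C2_def C3_def pm by auto
    obtain a :: 'a where True by blast
    obtain r2 where "f (replicate k [a]) = a # r2" using i(2)[rule_format, of "replicate k [a]"] i(1) by auto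
    then show False using e by simp
  qed
  show ?thesis unfolding Let_def C1_def[symmetric] C2_def[symmetric] C3_def[symmetric]
    using ex n12 n13 n23 by blast
qed

end
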